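(* Let $G$ be a hypo-unique domination graph. Then either $G=K_2$, or $G$ is a connected vertex domination-critical graph with $|V(G)|\geq 4$.
   Context: All graphs are finite, simple and undirected. A set $D\subseteq V(G)$ is dominating if every vertex of $G$ not in $D$ has a neighbor in $D$; $\gamma(G)$ is the minimum size of a dominating set, and a dominating set of size $\gamma(G)$ is a $\gamma$-set. A vertex $v$ is $\gamma$-critical if $\gamma(G-v)<\gamma(G)$; $G$ is a vertex domination-critical graph (vc-graph) if every vertex of $G$ is $\gamma$-critical. $G$ is a hypo-unique domination graph (hypo-$\mathcal{UD}$ graph) if $G$ has at least two $\gamma$-sets but for every $v\in V(G)$ the graph $G-v$ has exactly one $\gamma$-set. *)

theory Defs
  imports Main
begin

definition graph :: "'a set \<Rightarrow> ('a \<Rightarrow> 'a \<Rightarrow> bool) \<Rightarrow> bool" where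
  "graph V E \<longleftrightarrow> finite V \<and>
     (\<forall>x y. E x y \<longrightarrow> x \<in> V \<and> y \<in> V \<and> x \<noteq> y \<and> E y x)"

definition dominating :: "'a set \<Rightarrow> ('a \<Rightarrow> 'a \<Rightarrow> bool) \<Rightarrow> 'a set \<Rightarrow> bool" where
  "dominating V E D \<longleftrightarrow> D \<subseteq> V \<and> (\<forall>v \<in> V - D. \<exists>u \<in> D. E v u)"

definition gamma :: "'a set \<Rightarrow> ('a \<Rightarrow> 'a \<Rightarrow> bool) \<Rightarrow> nat" where
  "gamma V E = Min {card D | D. dominating V E D}"

definition gamma_set :: "'a set \<Rightarrow> ('a \<Rightarrow> 'a \<Rightarrow> bool) \<Rightarrow> 'a set \<Rightarrow> bool" where
  "gamma_set V E D \<longleftrightarrow> dominating V E D \<and> card D = gamma V E"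

definition del_vertex_edges :: "('a \<Rightarrow> 'a \<Rightarrow> bool) \<Rightarrow> 'a \<Rightarrow> ('a \<Rightarrow> 'a \<Rightarrow> bool)" where
  "del_vertex_edges E v = (\<lambda>x y. E x y \<and> x \<noteq> v \<and> y \<noteq> v)"

definition gamma_critical :: "'a set \<Rightarrow> ('a \<Rightarrow> 'a \<Rightarrow> bool) \<Rightarrow> 'a \<Rightarrow> bool" where
  "gamma_critical V E v \<longleftrightarrow> gamma (V - {v}) (del_vertex_edges E v) < gamma V E"

definition vc_graph :: "'a set \<Rightarrow> ('a \<Rightarrow> 'a \<Rightarrow> bool) \<Rightarrow> bool" where
  "vc_graph V E \<longleftrightarrow> (\<forall>v \<in> V. gamma_critical V E v)"

definition hypo_UD :: "'a set \<Rightarrow> ('a \<Rightarrow> 'a \<Rightarrow> bool) \<Rightarrow> bool" where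
  "hypo_UD V E \<longleftrightarrow>
     (\<exists>D1 D2. D1 \<noteq> D2 \<and> gamma_set V E D1 \<and> gamma_set V E D2) \<and>
     (\<forall>v \<in> V. \<exists>!D. gamma_set (V - {v}) (del_vertex_edges E v) D)"

definition connected_graph :: "'a set \<Rightarrow> ('a \<Rightarrow> 'a \<Rightarrow> bool) \<Rightarrow> bool" where
  "connected_graph V E \<longleftrightarrow> V \<noteq> {} \<and> (\<forall>x \<in> V. \<forall>y \<in> V. E\<^sup>*\<^sup>* x y)"

definition is_K2 :: "'a set \<Rightarrow> ('a \<Rightarrow> 'a \<Rightarrow> bool) \<Rightarrow> bool" where
  "is_K2 V E \<longleftrightarrow> card V = 2 \<and> (\<forall>x \<in> V. \<forall>y \<in> V. x \<noteq> y \<longrightarrow> E x y)"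

end

theory Submission imports Defs begin

lemma gamma_fin: "finite V \<Longrightarrow> finite {card D | D. dominating V E D}"
  by (rule finite_subset[of _ "{0..card V}"]) (auto simp: dominating_def intro: card_mono)

lemma gamma_le:
  assumes "finite V" "dominating V E D"
  shows "gamma V E \<le> card D"
  unfolding gamma_def using gamma_fin[OF assms(1)] assms(2) by (auto intro: Min_le)

lemma gamma_ex:
  assumes "finite V"
  shows "\<exists>D. gamma_set V E D"
proof -
  have ne: "{card D | D. dominating V E D} \<noteq> {}"
    using dominating_def by blast
  from Min_in[OF gamma_fin[OF assms] ne] obtain D where "dominating V E D" "card D = gamma V E"
    unfolding gamma_def by auto
  thus ?thesis unfolding gamma_set_def by auto
qed

locale hud =
  fixes V :: "'a set" and E :: "'a \<Rightarrow> 'a \<Rightarrow> bool"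
  assumes gr: "graph V E" and hu: "hypo_UD V E"
begin

lemma finV: "finite V" using gr by (simp add: graph_def)
lemma Esym: "E x y \<Longrightarrow> E y x" using gr by (simp add: graph_def)
lemma Ein: "E x y \<Longrightarrow> x \<in> V \<and> y \<in> V" using gr by (simp add: graph_def)
lemma Eirr: "E x y \<Longrightarrow> x \<noteq> y" using gr by (simp add: graph_def)

abbreviation "g \<equiv> gamma V E"
abbreviation "gs \<equiv> gamma_set V E"
abbreviation "gv v \<equiv> gamma (V - {v}) (del_vertex_edges E v)"
abbreviation "gsv v \<equiv> gamma_set (V - {v}) (del_vertex_edges E v)"
abbreviation "domv v \<equiv> dominating (V - {v}) (del_vertex_edges E v)"
abbreviation "crit v \<equiv> gamma_critical V E v"

definition priv where "priv D v y \<longleftrightarrow> y \<in> V \<and> y \<notin> D \<and> E y v \<and> (\<forall>d\<in>D. E y d \<longrightarrow> d = v)"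

lemma two: "\<exists>D1 D2. D1 \<noteq> D2 \<and> gs D1 \<and> gs D2" using hu by (simp add: hypo_UD_def)
lemma uniq: "v \<in> V \<Longrightarrow> gsv v A \<Longrightarrow> gsv v B \<Longrightarrow> A = B"
  using hu unfolding hypo_UD_def by metis

lemma gs_sub: "gs D \<Longrightarrow> D \<subseteq> V \<and> finite D"
  using finV unfolding gamma_set_def dominating_def by (auto intro: finite_subset)
lemma g_le: "dominating V E D \<Longrightarrow> g \<le> card D" using gamma_le finV by blast
lemma gv_le: "domv v D \<Longrightarrow> gv v \<le> card D" using gamma_le finV by blast
lemma gs_card: "gs D \<Longrightarrow> card D = g" by (simp add: gamma_set_def)
lemma gs_dom: "gs D \<Longrightarrow> dominating V E D" by (simp add: gamma_set_def)

lemma g_pos: "g \<ge> 1"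
proof (rule ccontr)
  assume "\<not> g \<ge> 1"
  hence "g = 0" by simp
  obtain D1 D2 where "D1 \<noteq> D2" "gs D1" "gs D2" using two by blast
  thus False using gs_sub gs_card \<open>g = 0\<close> by (metis card_0_eq)
qed

lemma F0: assumes "v \<in> V" shows "g \<le> gv v + 1"
proof -
  obtain A where A: "gsv v A" using gamma_ex finV by blast
  have "dominating V E (insert v A)"
    using A assms unfolding gamma_set_def dominating_def del_vertex_edges_def by blast
  hence "g \<le> card (insert v A)" by (rule g_le)
  also have "\<dots> \<le> card A + 1" by (simp add: card_insert_le_m1)
  finally show ?thesis using A by (simp add: gamma_set_def)
qed

lemma F1: "gs D \<Longrightarrow> v \<notin> D \<Longrightarrow> domv v D"
  unfolding gamma_set_def dominating_def del_vertex_edges_def by blast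

lemma ncrit: "\<not> crit v \<longleftrightarrow> g \<le> gv v" by (auto simp: gamma_critical_def)

lemma gsv_of: "\<not> crit v \<Longrightarrow> domv v A \<Longrightarrow> card A = g \<Longrightarrow> gsv v A"
  using gv_le[of v A] ncrit[of v] by (simp add: gamma_set_def)

lemma F2: "v \<in> V \<Longrightarrow> \<not> crit v \<Longrightarrow> gs D1 \<Longrightarrow> gs D2 \<Longrightarrow> v \<notin> D1 \<Longrightarrow> v \<notin> D2 \<Longrightarrow> D1 = D2"
  using gsv_of F1 gs_card uniq by metis


lemma F3: assumes "v \<in> V" "crit v"
  shows "\<exists>T. v \<notin> T \<and> T \<subseteq> V \<and> finite T \<and> card T = g - 1 \<and> (\<forall>t\<in>T. \<not> E v t) \<and>
             (\<forall>z. (z = v \<or> E v z) \<longrightarrow> gs (insert z T))"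
proof -
  obtain T where T: "gsv v T" using gamma_ex finV by blast
  have sub: "T \<subseteq> V - {v}" using T by (simp add: gamma_set_def dominating_def)
  have fT: "finite T" using sub finV finite_subset by blast
  have cT: "card T = g - 1" using T F0[OF assms(1)] assms(2) by (simp add: gamma_set_def gamma_critical_def)
  have nn: "\<forall>t\<in>T. \<not> E v t"
  proof (intro ballI notI)
    fix t assume "t \<in> T" "E v t"
    have "dominating V E T" using T sub \<open>t \<in> T\<close> \<open>E v t\<close>
      unfolding gamma_set_def dominating_def del_vertex_edges_def by blast
    hence "g \<le> card T" by (rule g_le)
    thus False using cT g_pos by simp
  qed
  have "gs (insert z T)" if z: "z = v \<or> E v z" for z
  proof -
    have zV: "z \<in> V" using z assms(1) Ein by blast
    have zT: "z \<notin> T" using z sub nn by blast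
    have "dominating V E (insert z T)"
      using T sub zV z unfolding gamma_set_def dominating_def del_vertex_edges_def by blast
    moreover have "card (insert z T) = g" using zT fT cT g_pos by simp
    ultimately show ?thesis by (simp add: gamma_set_def)
  qed
  thus ?thesis using sub fT cT nn by blast
qed

lemma P0: assumes "v \<in> V" "\<not> crit v" "gs D" "v \<in> D"
  shows "\<exists>x. priv D v x"
proof (rule ccontr)
  assume np: "\<not> (\<exists>x. priv D v x)"
  have sub: "D \<subseteq> V" "finite D" using gs_sub[OF assms(3)] by auto
  have "domv v (D - {v})"
    unfolding dominating_def
  proof (intro conjI ballI)
    show "D - {v} \<subseteq> V - {v}" using sub by blast
  next
    fix y assume y: "y \<in> V - {v} - (D - {v})"
    hence yD: "y \<notin> D" by blast
    then obtain u where u: "u \<in> D" "E y u" using assms(3) y unfolding gamma_set_def dominating_def by blast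
    show "\<exists>u\<in>D - {v}. del_vertex_edges E v y u"
    proof (cases "\<exists>u\<in>D. E y u \<and> u \<noteq> v")
      case True thus ?thesis using y unfolding del_vertex_edges_def by blast
    next
      case False
      hence "priv D v y" using u y unfolding priv_def by blast
      thus ?thesis using np by blast
    qed
  qed
  hence "gv v \<le> card (D - {v})" by (rule gv_le)
  also have "\<dots> = g - 1" using assms(3,4) gs_card by simp
  finally show False using assms(2) ncrit g_pos by simp
qed

lemma leaf: assumes "gs D" "x \<in> D" "v \<in> D" "E x v" "\<forall>w. E x w \<longrightarrow> w = v"
  shows False
proof -
  have xv: "x \<noteq> v" using Eirr assms(4) by blast
  have "dominating V E (D - {x})"
    using assms xv Esym unfolding gamma_set_def dominating_def by (metis DiffD1 DiffD2 DiffI insertI1 singleton_iff subset_iff)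
  hence "g \<le> card (D - {x})" by (rule g_le)
  also have "\<dots> = g - 1" using assms(1,2) gs_card by simp
  finally show False using g_pos by simp
qed

lemma Q: assumes "x \<in> V" "\<not> crit x" "gs D" "gs D'" "x \<notin> D" "x \<in> D'" "w \<in> V" "w \<notin> D'" "E w x"
  shows "w \<in> D"
proof (rule ccontr)
  assume wD: "w \<notin> D"
  have "D \<noteq> D'" using assms by blast
  hence cw: "crit w" using F2[OF assms(7) _ assms(3,4) wD assms(8)] by (rule contrapos_np)
  then obtain T where T: "w \<notin> T" "\<forall>t\<in>T. \<not> E w t" "\<forall>z. (z = w \<or> E w z) \<longrightarrow> gs (insert z T)"
    using F3[OF assms(7)] by blast
  have xi: "x \<notin> insert w T" using T(2) assms(9) Eirr by blast
  have gi: "gs (insert w T)" using T(3) by blast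
  have "D = insert w T" using F2[OF assms(1,2,3) gi assms(5) xi] .
  thus False using wD by blast
qed

lemma R: assumes "v \<in> V" "\<not> crit v" "x \<in> V" "crit x" "E x v"
  shows "(\<forall>w. E x w \<longrightarrow> w = v) \<and> (\<exists>T. v \<notin> T \<and> x \<notin> T \<and> gs (insert x T) \<and> gs (insert v T))"
proof -
  obtain T where T: "x \<notin> T" "\<forall>t\<in>T. \<not> E x t" "\<forall>z. (z = x \<or> E x z) \<longrightarrow> gs (insert z T)"
    using F3[OF assms(3,4)] by blast
  have vT: "v \<notin> T" using T(2) assms(5) by blast
  have xv: "x \<noteq> v" using Eirr assms(5) by blast
  have "w = v" if "E x w" for w
  proof (rule ccontr)
    assume "w \<noteq> v"
    have g1: "gs (insert w T)" "gs (insert x T)" using T(3) that by blast+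
    have n1: "v \<notin> insert w T" "v \<notin> insert x T" using vT xv \<open>w \<noteq> v\<close> by blast+
    have eq: "insert w T = insert x T" using F2[OF assms(1,2) g1 n1] .
    have "w \<in> insert x T" unfolding eq[symmetric] by simp
    moreover have "w \<noteq> x" using Eirr that by blast
    ultimately have "w \<in> T" by simp
    thus False using that T(2) by blast
  qed
  moreover have "gs (insert x T)" "gs (insert v T)" using T(3) assms(5) by blast+
  ultimately show ?thesis using T(1) vT by blast
qed

lemma L2: assumes "v \<in> V" "\<not> crit v" "x \<in> V" "y \<in> V" "crit x" "crit y" "E x v" "E y v"
  shows "x = y"
proof (rule ccontr)
  assume xy: "x \<noteq> y"
  obtain T where T: "v \<notin> T" "x \<notin> T" "gs (insert x T)" "gs (insert v T)" using R[OF assms(1-3,5,7)] by blast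
  obtain T' where T': "v \<notin> T'" "y \<notin> T'" "gs (insert y T')" "gs (insert v T')" and ly: "\<forall>w. E y w \<longrightarrow> w = v"
    using R[OF assms(1,2,4,6,8)] by blast
  have "x \<noteq> v" "y \<noteq> v" using assms(7,8) Eirr by blast+
  hence "insert x T = insert y T'" using F2[OF assms(1,2) T(3) T'(3)] T(1) T'(1) by blast
  hence "y \<in> insert x T" by (metis insertI1)
  hence "y \<in> T" using xy by simp
  hence "y \<in> insert v T" by simp
  thus False using leaf[OF T(4) _ _ assms(8) ly] by blast
qed

lemma A1: assumes "v \<in> V" "\<not> crit v" "gs D" "gs D'" "D \<noteq> D'" "v \<in> D" "v \<in> D'" "priv D v x"
  shows "crit x"
proof (rule ccontr)
  assume nx: "\<not> crit x"
  have x: "x \<in> V" "x \<notin> D" "E x v" "\<forall>d\<in>D. E x d \<longrightarrow> d = v" using assms(8) priv_def by auto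
  have xD': "x \<in> D'" using F2[OF x(1) nx assms(3,4) x(2)] assms(5) by blast
  obtain w where w: "priv D' x w" using P0[OF x(1) nx assms(4) xD'] by blast
  hence w': "w \<in> V" "w \<notin> D'" "E w x" using priv_def by auto
  have "w \<in> D" using Q[OF x(1) nx assms(3,4) x(2) xD' w'] .
  hence "w = v" using x(4) Esym w'(3) by blast
  thus False using w'(2) assms(7) by blast
qed

lemma privdom: assumes "v \<in> V" "gs D" "v \<in> D" "priv D v x" "\<forall>y. priv D v y \<longrightarrow> y = x"
  shows "domv v (insert x (D - {v})) \<and> card (insert x (D - {v})) = g"
proof
  have x: "x \<in> V" "x \<notin> D" "E x v" using assms(4) priv_def by auto
  have sub: "D \<subseteq> V" "finite D" using gs_sub[OF assms(2)] by auto
  show "domv v (insert x (D - {v}))"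
    unfolding dominating_def
  proof (intro conjI ballI)
    show "insert x (D - {v}) \<subseteq> V - {v}" using sub x assms(3) by blast
  next
    fix y assume y: "y \<in> V - {v} - insert x (D - {v})"
    hence yD: "y \<notin> D" by blast
    then obtain u where u: "u \<in> D" "E y u" using assms(2) y unfolding gamma_set_def dominating_def by blast
    show "\<exists>u\<in>insert x (D - {v}). del_vertex_edges E v y u"
    proof (cases "\<exists>u\<in>D. E y u \<and> u \<noteq> v")
      case True thus ?thesis using y unfolding del_vertex_edges_def by blast
    next
      case False
      hence "priv D v y" using u y unfolding priv_def by blast
      thus ?thesis using assms(5) y by blast
    qed
  qed
  have "card (D - {v}) = g - 1" using assms(2,3) gs_card by simp
  thus "card (insert x (D - {v})) = g" using x sub g_pos by simp
qed

lemma LA: assumes "v \<in> V" "\<not> crit v" "gs D" "gs D'" "D \<noteq> D'" "v \<in> D" "v \<in> D'"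
  shows False
proof -
  obtain x where x: "priv D v x" using P0[OF assms(1,2,3,6)] by blast
  obtain x' where x': "priv D' v x'" using P0[OF assms(1,2,4,7)] by blast
  have cx: "crit y" if "priv D v y" for y using A1[OF assms] that .
  have cx': "crit y" if "priv D' v y" for y using A1[OF assms(1,2,4,3) _ assms(7,6)] that assms(5) by metis
  have ux: "\<forall>y. priv D v y \<longrightarrow> y = x" using L2[OF assms(1,2)] cx x unfolding priv_def by metis
  have ux': "\<forall>y. priv D' v y \<longrightarrow> y = x'" using L2[OF assms(1,2)] cx' x' unfolding priv_def by metis
  have xx: "x = x'" using L2[OF assms(1,2)] cx x cx' x' unfolding priv_def by metis
  have g1: "gsv v (insert x (D - {v}))" using privdom[OF assms(1,3,6) x ux] gsv_of assms(2) by blast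
  have g2: "gsv v (insert x (D' - {v}))" using privdom[OF assms(1,4,7) x' ux'] gsv_of assms(2) xx by blast
  have "insert x (D - {v}) = insert x (D' - {v})" using uniq[OF assms(1) g1 g2] .
  moreover have "x \<notin> D - {v}" "x \<notin> D' - {v}" using x x' xx priv_def by auto
  ultimately have "D - {v} = D' - {v}" using insert_ident[of x "D - {v}" "D' - {v}"] by simp
  thus False using assms(5,6,7) by blast
qed

lemma noiso: assumes "a \<in> V" shows "\<exists>z. E a z"
proof (rule ccontr)
  assume ni: "\<not> (\<exists>z. E a z)"
  obtain D1 D2 where D: "D1 \<noteq> D2" "gs D1" "gs D2" using two by blast
  have inD: "a \<in> X" if "gs X" for X using that assms ni unfolding gamma_set_def dominating_def by blast
  have dv: "gsv a (X - {a})" if "gs X" for X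
  proof -
    have "domv a (X - {a})" using that ni Esym unfolding gamma_set_def dominating_def del_vertex_edges_def by blast
    moreover have "card (X - {a}) = g - 1" using that inD gs_card by simp
    moreover have "g \<le> gv a + 1" using F0[OF assms] .
    ultimately show ?thesis using gv_le[of a "X - {a}"] by (simp add: gamma_set_def)
  qed
  have "D1 - {a} = D2 - {a}" using uniq[OF assms dv[OF D(2)] dv[OF D(3)]] .
  thus False using D inD by blast
qed


lemma LB: assumes "v \<in> V" "\<not> crit v" "g \<ge> 2" shows False
proof -
  obtain D1 D2 where D12: "D1 \<noteq> D2" "gs D1" "gs D2" using two by blast
  obtain D S where DS: "gs D" "gs S" "D \<noteq> S" "v \<in> D" "v \<notin> S"
  proof (cases "v \<in> D1")
    case True
    hence "v \<notin> D2" using LA[OF assms(1,2) D12(2,3,1) True] by blast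
    thus ?thesis using that[OF D12(2,3,1) True] by simp
  next
    case False
    hence "v \<in> D2" using F2[OF assms(1,2) D12(2,3) False] D12(1) by blast
    thus ?thesis using that[OF D12(3,2) D12(1)[symmetric]] False by simp
  qed
  have allgs: "X = D \<or> X = S" if "gs X" for X
  proof (cases "v \<in> X")
    case True thus ?thesis using LA[OF assms(1,2) DS(1) that _ DS(4) True] by blast
  next
    case False thus ?thesis using F2[OF assms(1,2) that DS(2) False DS(5)] by blast
  qed
  have key: False if a: "a \<in> D" "a \<in> S" for a
  proof (cases "crit a")
    case False
    have "a \<in> V" using gs_sub DS(1) a by blast
    thus False using LA[OF _ False DS(1,2,3) a] by blast
  next
    case True
    have aV: "a \<in> V" using gs_sub DS(1) a by blast
    obtain T where T: "a \<notin> T" "\<forall>z. (z = a \<or> E a z) \<longrightarrow> gs (insert z T)" using F3[OF aV True] by blast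
    obtain z where z: "E a z" using noiso[OF aV] by blast
    have gz: "gs (insert z T)" using T(2) z by blast
    have "a \<notin> insert z T" using T(1) z Eirr by blast
    thus False using allgs[OF gz] a by blast
  qed
  have Dsub: "D \<subseteq> V" "finite D" "S \<subseteq> V" "finite S" using gs_sub DS(1,2) by auto
  obtain x where x: "priv D v x" using P0[OF assms(1,2) DS(1,4)] by blast
  show False
  proof (cases "\<exists>y. priv D v y \<and> \<not> crit y")
    case True
    then obtain y where y: "priv D v y" "\<not> crit y" by blast
    have y': "y \<in> V" "y \<notin> D" "E y v" "\<forall>d\<in>D. E y d \<longrightarrow> d = v" using y(1) priv_def by auto
    have yS: "y \<in> S" using F2[OF y'(1) y(2) DS(1,2) y'(2)] DS(3) by blast
    have pv: "w = v" if "priv S y w" for w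
    proof -
      have w: "w \<in> V" "w \<notin> S" "E w y" using that priv_def by auto
      have "w \<in> D" using Q[OF y'(1) y(2) DS(1,2) y'(2) yS w] .
      thus ?thesis using y'(4) Esym w(3) by blast
    qed
    obtain w where w: "priv S y w" using P0[OF y'(1) y(2) DS(2) yS] by blast
    have pvv: "priv S y v" using w pv by blast
    have d1: "domv y (insert v (S - {y}))" "card (insert v (S - {y})) = g"
      using privdom[OF y'(1) DS(2) yS pvv] pv by blast+
    have "gsv y (insert v (S - {y}))" using gsv_of[OF y(2) d1] .
    moreover have "gsv y D" using gsv_of[OF y(2) F1[OF DS(1) y'(2)] gs_card[OF DS(1)]] .
    ultimately have eq: "D = insert v (S - {y})" using uniq[OF y'(1)] by blast
    have "card (S - {y}) = g - 1" using yS gs_card[OF DS(2)] by simp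
    hence "S - {y} \<noteq> {}" using assms(3) by (intro notI) simp
    then obtain a where "a \<in> S - {y}" by blast
    thus False using key eq by blast
  next
    case False
    hence cr: "crit y" if "priv D v y" for y using that by blast
    have ux: "\<forall>y. priv D v y \<longrightarrow> y = x" using L2[OF assms(1,2)] cr x unfolding priv_def by metis
    have d1: "domv v (insert x (D - {v}))" "card (insert x (D - {v})) = g"
      using privdom[OF assms(1) DS(1,4) x ux] by blast+
    have "gsv v (insert x (D - {v}))" using gsv_of[OF assms(2) d1] .
    moreover have "gsv v S" using gsv_of[OF assms(2) F1[OF DS(2,5)] gs_card[OF DS(2)]] .
    ultimately have eq: "S = insert x (D - {v})" using uniq[OF assms(1)] by blast
    have "card (D - {v}) = g - 1" using DS(4) gs_card[OF DS(1)] by simp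
    hence "D - {v} \<noteq> {}" using assms(3) by (intro notI) simp
    then obtain a where "a \<in> D - {v}" by blast
    thus False using key eq by blast
  qed
qed

lemma comp: assumes cl: "\<And>a b. E a b \<Longrightarrow> (a \<in> C \<longleftrightarrow> b \<in> C)" and w: "w \<in> V" "w \<notin> C"
  and D: "gs D" and T: "gsv w T"
  shows "D \<inter> C = T \<inter> C"
proof -
  define A where "A = (T - C) \<union> (D \<inter> C)"
  define B where "B = (D - C) \<union> (T \<inter> C)"
  have Ts: "T \<subseteq> V - {w}" using T by (simp add: gamma_set_def dominating_def)
  have Tdom: "\<forall>y\<in>V - {w} - T. \<exists>u\<in>T. del_vertex_edges E w y u" using T by (simp add: gamma_set_def dominating_def)
  have Ddom: "\<forall>y\<in>V - D. \<exists>u\<in>D. E y u" using D by (simp add: gamma_set_def dominating_def)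
  have Ds: "D \<subseteq> V" "finite D" using gs_sub D by auto
  have fT: "finite T" using Ts finV finite_subset by blast
  have dA: "domv w A"
    unfolding dominating_def
  proof (intro conjI ballI)
    show "A \<subseteq> V - {w}" using Ts Ds w unfolding A_def by blast
  next
    fix y assume y: "y \<in> V - {w} - A"
    show "\<exists>u\<in>A. del_vertex_edges E w y u"
    proof (cases "y \<in> C")
      case True
      hence "y \<notin> D" using y unfolding A_def by blast
      hence "y \<in> V - D" using y by blast
      then obtain u where u: "u \<in> D" "E y u" using Ddom by blast
      have uC: "u \<in> C" using cl[OF u(2)] True by simp
      hence "u \<noteq> w" using w by blast
      moreover have "y \<noteq> w" using y by blast
      ultimately have "del_vertex_edges E w y u" using u(2) unfolding del_vertex_edges_def by simp
      moreover have "u \<in> A" using u(1) uC unfolding A_def by blast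
      ultimately show ?thesis by blast
    next
      case False
      hence "y \<notin> T" using y unfolding A_def by blast
      hence "y \<in> V - {w} - T" using y by blast
      then obtain u where u: "u \<in> T" "del_vertex_edges E w y u" using Tdom by blast
      have "E y u" using u(2) unfolding del_vertex_edges_def by simp
      hence "u \<notin> C" using cl[of y u] False by simp
      hence "u \<in> A" using u(1) unfolding A_def by blast
      thus ?thesis using u(2) by blast
    qed
  qed
  have dB: "dominating V E B"
    unfolding dominating_def
  proof (intro conjI ballI)
    show "B \<subseteq> V" using Ts Ds unfolding B_def by blast
  next
    fix y assume y: "y \<in> V - B"
    show "\<exists>u\<in>B. E y u"
    proof (cases "y \<in> C")
      case True
      hence "y \<notin> T" using y unfolding B_def by blast
      moreover have "y \<noteq> w" using True w by blast
      ultimately have "y \<in> V - {w} - T" using y by blast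
      then obtain u where u: "u \<in> T" "del_vertex_edges E w y u" using Tdom by blast
      have Eyu: "E y u" using u(2) unfolding del_vertex_edges_def by simp
      hence "u \<in> C" using cl[OF Eyu] True by simp
      hence "u \<in> B" using u(1) unfolding B_def by blast
      thus ?thesis using Eyu by blast
    next
      case False
      hence "y \<notin> D" using y unfolding B_def by blast
      hence "y \<in> V - D" using y by blast
      then obtain u where u: "u \<in> D" "E y u" using Ddom by blast
      hence "u \<notin> C" using cl[OF u(2)] False by simp
      hence "u \<in> B" using u(1) unfolding B_def by blast
      thus ?thesis using u(2) by blast
    qed
  qed
  have cA: "card A = card (T - C) + card (D \<inter> C)" unfolding A_def
    using fT Ds by (intro card_Un_disjoint) auto
  have cB: "card B = card (D - C) + card (T \<inter> C)" unfolding B_def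
    using fT Ds by (intro card_Un_disjoint) auto
  have cT: "card T = card (T \<inter> C) + card (T - C)" using card_Int_Diff[OF fT] .
  have cD: "card D = card (D \<inter> C) + card (D - C)" using card_Int_Diff[OF Ds(2)] .
  have "gv w \<le> card A" using gv_le[OF dA] .
  moreover have "g \<le> card B" using g_le[OF dB] .
  moreover have "card T = gv w" using T by (simp add: gamma_set_def)
  moreover have "card D = g" using gs_card[OF D] .
  ultimately have "card A = gv w" using cA cB cT cD by linarith
  hence "gsv w A" using dA by (simp add: gamma_set_def)
  hence "A = T" using uniq[OF w(1) _ T] by blast
  thus ?thesis unfolding A_def by blast
qed

lemma connected: "connected_graph V E"
  unfolding connected_graph_def
proof (intro conjI ballI)
  obtain D1 D2 where D12: "D1 \<noteq> D2" "gs D1" "gs D2" using two by blast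
  show "V \<noteq> {}"
  proof
    assume "V = {}"
    hence "D1 = {}" "D2 = {}" using gs_sub D12 by auto
    thus False using D12 by simp
  qed
  fix x y assume xy: "x \<in> V" "y \<in> V"
  show "E\<^sup>*\<^sup>* x y"
  proof (rule ccontr)
    assume nxy: "\<not> E\<^sup>*\<^sup>* x y"
    define C where "C = {z. E\<^sup>*\<^sup>* x z}"
    have cl: "(a \<in> C) = (b \<in> C)" if ab: "E a b" for a b
    proof -
      have "E\<^sup>*\<^sup>* x a \<Longrightarrow> E\<^sup>*\<^sup>* x b" using rtranclp.rtrancl_into_rtrancl[of E x a b] ab by blast
      moreover have "E\<^sup>*\<^sup>* x b \<Longrightarrow> E\<^sup>*\<^sup>* x a" using rtranclp.rtrancl_into_rtrancl[of E x b a] Esym[OF ab] by blast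
      ultimately show ?thesis unfolding C_def by blast
    qed
    have cl2: "(a \<in> -C) = (b \<in> -C)" if "E a b" for a b using cl[OF that] by simp
    have yC: "y \<notin> C" using nxy C_def by blast
    have xC: "x \<notin> -C" unfolding C_def by simp
    obtain T where T: "gsv y T" using gamma_ex finV by blast
    obtain T' where T': "gsv x T'" using gamma_ex finV by blast
    have "D1 \<inter> C = D2 \<inter> C"
      using comp[OF cl xy(2) yC D12(2) T] comp[OF cl xy(2) yC D12(3) T] by simp
    moreover have "D1 \<inter> -C = D2 \<inter> -C"
      using comp[OF cl2 xy(1) xC D12(2) T'] comp[OF cl2 xy(1) xC D12(3) T'] by simp
    ultimately have "D1 = D2" by blast
    thus False using D12 by simp
  qed
qed

lemma card4: assumes "g \<ge> 2" shows "card V \<ge> 4"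
proof (rule ccontr)
  assume c: "\<not> card V \<ge> 4"
  obtain v where v: "v \<in> V" using connected unfolding connected_graph_def by blast
  obtain u where u: "E v u" using noiso[OF v] by blast
  have uV: "u \<in> V" using Ein u by blast
  have "\<not> dominating V E {u}"
  proof
    assume "dominating V E {u}"
    hence "g \<le> 1" using g_le by fastforce
    thus False using assms by simp
  qed
  then obtain y where y: "y \<in> V" "y \<noteq> u" "\<not> E y u" using uV unfolding dominating_def by blast
  have yv: "y \<noteq> v" using y(3) u Esym by blast
  have uv: "u \<noteq> v" using u Eirr by blast
  have "card {u, v, y} = 3" using yv uv y(2) by simp
  moreover have "{u, v, y} \<subseteq> V" using uV v y by blast
  moreover have "card {u, v, y} \<le> card V" using card_mono[OF finV] calculation(2) .
  ultimately have "card {u, v, y} = card V" using c by linarith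
  hence Veq: "V = {u, v, y}" using card_subset_eq[OF finV \<open>{u, v, y} \<subseteq> V\<close>] by simp
  obtain z where z: "E y z" using noiso[OF y(1)] by blast
  have "z \<in> V" using Ein z by blast
  moreover have "z \<noteq> y" using Eirr z by blast
  moreover have "z \<noteq> u" using y(3) z by blast
  ultimately have zv: "z = v" using Veq by blast
  have "\<forall>t\<in>V - {v}. \<exists>s\<in>{v}. E t s"
  proof
    fix t assume t: "t \<in> V - {v}"
    hence "t = u \<or> t = y" using Veq by blast
    thus "\<exists>s\<in>{v}. E t s" using Esym[OF u] z zv by blast
  qed
  hence "dominating V E {v}" using v unfolding dominating_def by blast
  hence "g \<le> 1" using g_le by fastforce
  thus False using assms by simp
qed


lemma K2: assumes "g = 1" shows "is_K2 V E"
proof -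
  obtain D1 D2 where D12: "D1 \<noteq> D2" "gs D1" "gs D2" using two by blast
  have "card D1 = Suc 0" "card D2 = Suc 0" using gs_card D12 assms by auto
  then obtain a b where a: "D1 = {a}" and b: "D2 = {b}" using card_1_singleton_iff by metis
  have ab: "a \<noteq> b" using D12(1) a b by blast
  have aV: "a \<in> V" and bV: "b \<in> V" using gs_sub D12(2,3) a b by auto
  have Vab: "y \<in> {a, b}" if y: "y \<in> V" for y
  proof (rule ccontr)
    assume yn: "y \<notin> {a, b}"
    obtain T where T: "gsv y T" using gamma_ex finV by blast
    have Ts: "T \<subseteq> V - {y}" using T by (simp add: gamma_set_def dominating_def)
    have fT: "finite T" using Ts finV finite_subset by blast
    have "card T \<noteq> 0"
    proof
      assume "card T = 0"
      hence "T = {}" using fT by simp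
      hence "V - {y} = {}" using T by (auto simp: gamma_set_def dominating_def)
      thus False using aV yn by blast
    qed
    hence ge: "gv y \<ge> 1" using T by (simp add: gamma_set_def)
    have da: "domv y {a}" using F1[OF D12(2)] a yn by simp
    have db: "domv y {b}" using F1[OF D12(3)] b yn by simp
    have "gsv y {a}" using da gv_le[OF da] ge by (simp add: gamma_set_def)
    moreover have "gsv y {b}" using db gv_le[OF db] ge by (simp add: gamma_set_def)
    ultimately have "{a} = {b}" using uniq[OF y] by blast
    thus False using ab by simp
  qed
  have Veq: "V = {a, b}" using Vab aV bV by blast
  have "b \<in> V - D1" using bV ab a by blast
  hence "\<exists>u\<in>D1. E b u" using gs_dom[OF D12(2)] unfolding dominating_def by blast
  hence Eba: "E b a" using a by simp
  show ?thesis unfolding is_K2_def using Veq ab Eba Esym by auto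
qed

end

theorem theorem3p1:
  fixes V :: "'a set" and E :: "'a \<Rightarrow> 'a \<Rightarrow> bool"
  assumes "graph V E"
    and "hypo_UD V E"
  shows "is_K2 V E \<or> (connected_graph V E \<and> vc_graph V E \<and> card V \<ge> 4)"
proof -
  interpret hud V E using assms by unfold_locales
  show ?thesis
  proof (cases "gamma V E = 1")
    case True
    thus ?thesis using K2 by blast
  next
    case False
    hence g2: "gamma V E \<ge> 2" using g_pos by simp
    have "vc_graph V E" unfolding vc_graph_def using LB g2 by blast
    thus ?thesis using connected card4[OF g2] by blast
  qed
qed

end
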